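(* Let $\mu$ be a probability measure on $\mathbb{R}$ whose support is not included in $(-\infty,0)$, and let $\phi(\lambda)=\int_{\mathbb{R}}e^{\lambda x}\,\mu(dx)\in(0,\infty]$, $\lambda\in\mathbb{R}$. Consider the conditions (a) there exists $\lambda<0$ such that $\phi(\lambda)<1$; (b) there exists $\lambda>0$ such that $\phi(\lambda)\in(1,\infty)$. The knowledge of the restrictions of the measures $\mu^{*n}$, $n\ge1$, to $[0,\infty)$ allows one to determine whether $\mu$ satisfies (a) and whether $\mu$ satisfies (b). When at least one of (a), (b) holds, $\mu\in\mathscr{C}$, i.e. every probability measure $\mu_1$ on $\mathbb{R}$ with $\mu_1^{*n}=\mu^{*n}$ on the Borel subsets of $[0,\infty)$ for all $n\ge1$ satisfies $\mu_1=\mu$.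
   Context: $\mu^{*n}$ is the $n$-fold convolution power of $\mu$. "Determine" means: if $\mu_1$ is a probability measure with $\mu_1^{*n}=\mu^{*n}$ on $[0,\infty)$ for all $n\ge1$, then $\mu_1$ satisfies (a) iff $\mu$ does, and $\mu_1$ satisfies (b) iff $\mu$ does. $\mathscr{C}$ is the set of probability measures on $\mathbb{R}$ determined in this sense by their convolution powers restricted to $[0,\infty)$. *)

theory Defs
  imports "HOL-Probability.Probability" "HOL-Probability.Convolution"
begin

definition measure_support :: "real measure \<Rightarrow> real set" where
  "measure_support M = {x. \<forall>e>0. emeasure M (ball x e) > 0}"

fun conv_pow :: "real measure \<Rightarrow> nat \<Rightarrow> real measure" where
  "conv_pow M 0 = return borel 0"
| "conv_pow M (Suc n) = convolution M (conv_pow M n)"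

definition laplace :: "real measure \<Rightarrow> real \<Rightarrow> ennreal" where
  "laplace M l = (\<integral>\<^sup>+ x. ennreal (exp (l * x)) \<partial>M)"

definition cond_a :: "real measure \<Rightarrow> bool" where
  "cond_a M \<longleftrightarrow> (\<exists>l<0. laplace M l < 1)"

definition cond_b :: "real measure \<Rightarrow> bool" where
  "cond_b M \<longleftrightarrow> (\<exists>l>0. 1 < laplace M l \<and> laplace M l < \<infinity>)"

definition same_pos_powers :: "real measure \<Rightarrow> real measure \<Rightarrow> bool" where
  "same_pos_powers M N \<longleftrightarrow>
     (\<forall>n\<ge>1. \<forall>A\<in>sets borel. A \<subseteq> {0..} \<longrightarrow>
        emeasure (conv_pow M n) A = emeasure (conv_pow N n) A)"

end

theory Submission
  imports Defs "HOL-Complex_Analysis.Complex_Analysis"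
begin


definition cmgf :: "real measure \<Rightarrow> complex \<Rightarrow> complex" where
  "cmgf M z = (CLINT x|M. exp (z * complex_of_real x))"

lemma exp_partial_le:
  fixes y :: real assumes "0 \<le> y"
  shows "(\<Sum>n<N. y ^ n / fact n) \<le> exp y"
proof -
  have "(\<lambda>n. y ^ n /\<^sub>R fact n) sums exp y" by (rule exp_converges)
  then have "(\<lambda>n. y ^ n / fact n) sums exp y"
    by (simp add: real_scaleR_def divide_inverse_commute)
  then have s: "summable (\<lambda>n. y ^ n / fact n)" and e: "exp y = (\<Sum>n. y ^ n / fact n)"
    by (auto simp: sums_iff)
  have "(\<Sum>n<N. y ^ n / fact n) \<le> (\<Sum>n. y ^ n / fact n)"
    by (rule sum_le_suminf[OF s]) (use assms in auto)
  then show ?thesis using e by simp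
qed

lemma exp_term_le:
  fixes y :: real assumes "0 \<le> y"
  shows "y ^ n / fact n \<le> exp y"
proof -
  have "y ^ n / fact n \<le> (\<Sum>k<Suc n. y ^ k / fact k)"
    using assms by (intro member_le_sum) auto
  also have "\<dots> \<le> exp y" by (rule exp_partial_le[OF assms])
  finally show ?thesis .
qed

lemma laplace_integrable:
  assumes [measurable_cong]: "sets M = sets borel" and "laplace M t < \<infinity>"
  shows "integrable M (\<lambda>x. exp (t * x))"
proof (rule integrableI_bounded)
  show "(\<lambda>x. exp (t * x)) \<in> borel_measurable M" by measurable
  show "(\<integral>\<^sup>+ x. ennreal (norm (exp (t * x))) \<partial>M) < \<infinity>"
    using assms(2) by (simp add: laplace_def)
qed

lemma exp_between:
  fixes x a b c :: real assumes "a \<le> c" "c \<le> b"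
  shows "exp (c * x) \<le> exp (a * x) + exp (b * x)"
proof (cases "x \<ge> 0")
  case True
  then have "exp (c * x) \<le> exp (b * x)" using assms by (simp add: mult_right_mono)
  then show ?thesis by (smt (verit) exp_gt_zero)
next
  case False
  then have "exp (c * x) \<le> exp (a * x)" using assms
    by (simp add: mult_right_mono_neg)
  then show ?thesis by (smt (verit) exp_gt_zero)
qed

lemma cmgf_bound_integrable:
  assumes [measurable_cong]: "sets M = sets borel"
    and "laplace M a < \<infinity>" "laplace M b < \<infinity>"
    and g[measurable]: "(g :: real \<Rightarrow> complex) \<in> borel_measurable borel"
    and bnd: "\<And>x. norm (g x) \<le> exp (a * x) + exp (b * x)"
  shows "integrable M g"
proof (rule Bochner_Integration.integrable_bound)
  show "integrable M (\<lambda>x. exp (a * x) + exp (b * x))"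
    using laplace_integrable[OF assms(1,2)] laplace_integrable[OF assms(1,3)] by auto
  show "g \<in> borel_measurable M" by measurable
  show "AE x in M. norm (g x) \<le> norm (exp (a * x) + exp (b * x))"
    using bnd by (auto intro!: AE_I2 order_trans[OF bnd])
qed

lemma exp_abs_bound:
  fixes x c \<rho> :: real assumes "0 \<le> \<rho>"
  shows "exp (\<rho> * \<bar>x\<bar>) * exp (c * x) \<le> exp ((c - \<rho>) * x) + exp ((c + \<rho>) * x)"
proof (cases "x \<ge> 0")
  case True
  then have "exp (\<rho> * \<bar>x\<bar>) * exp (c * x) = exp ((c + \<rho>) * x)"
    by (simp add: exp_add[symmetric] algebra_simps)
  then show ?thesis by (smt (verit) exp_gt_zero)
next
  case False
  then have "exp (\<rho> * \<bar>x\<bar>) * exp (c * x) = exp ((c - \<rho>) * x)"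
    by (simp add: exp_add[symmetric] algebra_simps)
  then show ?thesis by (smt (verit) exp_gt_zero)
qed

lemma cmgf_sums:
  assumes [measurable_cong]: "sets M = sets borel"
    and fa: "laplace M (Re z0 - cmod (w - z0)) < \<infinity>"
    and fb: "laplace M (Re z0 + cmod (w - z0)) < \<infinity>"
  shows "(\<lambda>n. ((CLINT x|M. complex_of_real x ^ n * exp (z0 * complex_of_real x)) / fact n) * (w - z0) ^ n)
           sums cmgf M w"
proof -
  define \<rho> where "\<rho> = cmod (w - z0)"
  define c where "c = Re z0"
  have \<rho>0: "0 \<le> \<rho>" by (simp add: \<rho>_def)
  define f where "f n x = ((w - z0) ^ n / fact n) * (complex_of_real x ^ n * exp (z0 * complex_of_real x))" for n x
  have nf: "norm (f n x) = (\<rho> * \<bar>x\<bar>) ^ n / fact n * exp (c * x)" for n x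
    by (simp add: f_def norm_mult norm_divide norm_power norm_exp_eq_Re \<rho>_def c_def power_mult_distrib)
  have bnd: "norm (f n x) \<le> exp ((c - \<rho>) * x) + exp ((c + \<rho>) * x)" for n x
  proof -
    have "norm (f n x) \<le> exp (\<rho> * \<bar>x\<bar>) * exp (c * x)"
      unfolding nf by (intro mult_right_mono exp_term_le) (auto simp: \<rho>0)
    also have "\<dots> \<le> exp ((c - \<rho>) * x) + exp ((c + \<rho>) * x)" by (rule exp_abs_bound[OF \<rho>0])
    finally show ?thesis .
  qed
  have fa': "laplace M (c - \<rho>) < \<infinity>" and fb': "laplace M (c + \<rho>) < \<infinity>"
    using fa fb by (simp_all add: c_def \<rho>_def)
  have fm[measurable]: "f n \<in> borel_measurable borel" for n
    unfolding f_def by measurable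
  have int: "integrable M (f n)" for n
    by (rule cmgf_bound_integrable[OF assms(1) fa' fb' fm bnd])
  have intB: "integrable M (\<lambda>x. exp ((c - \<rho>) * x) + exp ((c + \<rho>) * x))"
    using laplace_integrable[OF assms(1) fa'] laplace_integrable[OF assms(1) fb'] by auto
  have sumx: "(\<lambda>n. f n x) sums exp (w * complex_of_real x)" for x
  proof -
    have "(\<lambda>n. ((w - z0) * of_real x) ^ n /\<^sub>R fact n) sums exp ((w - z0) * of_real x)"
      by (rule exp_converges)
    then have "(\<lambda>n. ((w - z0) * of_real x) ^ n /\<^sub>R fact n * exp (z0 * of_real x)) sums
                 (exp ((w - z0) * of_real x) * exp (z0 * of_real x))" by (rule sums_mult2)
    moreover have "((w - z0) * of_real x) ^ n /\<^sub>R fact n * exp (z0 * of_real x) = f n x" for n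
      by (simp add: f_def scaleR_conv_of_real power_mult_distrib divide_inverse mult_ac)
    moreover have "exp ((w - z0) * of_real x) * exp (z0 * of_real x) = exp (w * of_real x)"
      by (simp add: exp_add[symmetric] algebra_simps)
    ultimately show ?thesis by simp
  qed
  have sumn: "summable (\<lambda>n. norm (f n x))" for x
  proof -
    have "(\<lambda>n. (\<rho> * \<bar>x\<bar>) ^ n /\<^sub>R fact n) sums exp (\<rho> * \<bar>x\<bar>)" by (rule exp_converges)
    then have "summable (\<lambda>n. (\<rho> * \<bar>x\<bar>) ^ n / fact n)"
      by (simp add: real_scaleR_def divide_inverse_commute sums_iff)
    then have "summable (\<lambda>n. (\<rho> * \<bar>x\<bar>) ^ n / fact n * exp (c * x))" by (rule summable_mult2)
    then show ?thesis unfolding nf .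
  qed
  have sumi: "summable (\<lambda>n. \<integral>x. norm (f n x) \<partial>M)"
  proof (rule summableI_nonneg_bounded[where x="\<integral>x. exp ((c - \<rho>) * x) + exp ((c + \<rho>) * x) \<partial>M"])
    show "0 \<le> (\<integral>x. norm (f n x) \<partial>M)" for n by (rule integral_nonneg_AE) auto
    fix N
    have "(\<Sum>n<N. \<integral>x. norm (f n x) \<partial>M) = (\<integral>x. (\<Sum>n<N. norm (f n x)) \<partial>M)"
      by (rule Bochner_Integration.integral_sum[symmetric]) (auto intro: int)
    also have "\<dots> \<le> (\<integral>x. exp ((c - \<rho>) * x) + exp ((c + \<rho>) * x) \<partial>M)"
    proof (rule integral_mono)
      show "integrable M (\<lambda>x. \<Sum>n<N. norm (f n x))"
        by (intro Bochner_Integration.integrable_sum integrable_norm int)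
      show "integrable M (\<lambda>x. exp ((c - \<rho>) * x) + exp ((c + \<rho>) * x))" by (rule intB)
      fix x
      have "(\<Sum>n<N. norm (f n x)) = (\<Sum>n<N. (\<rho> * \<bar>x\<bar>) ^ n / fact n) * exp (c * x)"
        unfolding nf by (simp add: sum_distrib_right)
      also have "\<dots> \<le> exp (\<rho> * \<bar>x\<bar>) * exp (c * x)"
        by (intro mult_right_mono exp_partial_le) (auto simp: \<rho>0)
      also have "\<dots> \<le> exp ((c - \<rho>) * x) + exp ((c + \<rho>) * x)" by (rule exp_abs_bound[OF \<rho>0])
      finally show "(\<Sum>n<N. norm (f n x)) \<le> exp ((c - \<rho>) * x) + exp ((c + \<rho>) * x)" .
    qed
    finally show "(\<Sum>n<N. \<integral>x. norm (f n x) \<partial>M) \<le> (\<integral>x. exp ((c - \<rho>) * x) + exp ((c + \<rho>) * x) \<partial>M)" .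
  qed
  have "(\<lambda>n. integral\<^sup>L M (f n)) sums (\<integral>x. (\<Sum>n. f n x) \<partial>M)"
    by (rule sums_integral[OF int _ sumi]) (auto intro: sumn)
  moreover have "(\<integral>x. (\<Sum>n. f n x) \<partial>M) = cmgf M w"
    unfolding cmgf_def using sumx by (simp add: sums_iff)
  moreover have "integral\<^sup>L M (f n) = ((CLINT x|M. complex_of_real x ^ n * exp (z0 * complex_of_real x)) / fact n) * (w - z0) ^ n" for n
    unfolding f_def by (simp add: integral_mult_right_zero)
  ultimately show ?thesis by simp
qed


lemma cmgf_holomorphic:
  assumes [measurable_cong]: "sets M = sets borel"
    and fin: "\<And>t. a < t \<Longrightarrow> t < b \<Longrightarrow> laplace M t < \<infinity>"
  shows "cmgf M holomorphic_on {z. a < Re z \<and> Re z < b}"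
proof -
  have eqS: "{z. a < Re z \<and> Re z < b} = {z. a < Re z} \<inter> {z. Re z < b}" by auto
  have op: "open {z. a < Re z \<and> Re z < b}"
    unfolding eqS by (intro open_Int open_halfspace_Re_gt open_halfspace_Re_lt)
  show ?thesis unfolding holomorphic_on_open[OF op]
  proof
    fix z0 assume z0: "z0 \<in> {z. a < Re z \<and> Re z < b}"
    define r where "r = min (Re z0 - a) (b - Re z0)"
    have r0: "0 < r" using z0 by (auto simp: r_def)
    have "cmgf M holomorphic_on ball z0 r"
    proof (rule power_series_holomorphic)
      fix w assume "w \<in> ball z0 r"
      then have "cmod (w - z0) < r" by (simp add: dist_norm norm_minus_commute)
      then have h0: "cmod (w - z0) < Re z0 - a" "cmod (w - z0) < b - Re z0"
        by (auto simp: r_def)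
      have h1: "a < Re z0 - cmod (w - z0)" "Re z0 + cmod (w - z0) < b"
        "Re z0 - cmod (w - z0) < b" "a < Re z0 + cmod (w - z0)"
        using norm_ge_zero[of "w - z0"] h0 by linarith+
      then show "(\<lambda>n. ((CLINT x|M. complex_of_real x ^ n * exp (z0 * complex_of_real x)) / fact n) * (w - z0) ^ n)
           sums cmgf M w"
        by (intro cmgf_sums assms(1) fin h1)
    qed
    then have "cmgf M field_differentiable at z0"
      using r0 by (intro holomorphic_on_imp_differentiable_at[of _ "ball z0 r"]) auto
    then show "\<exists>f'. (cmgf M has_field_derivative f') (at z0)"
      by (simp add: field_differentiable_def)
  qed
qed

lemma laplace_eq_integral:
  assumes "sets M = sets borel" "laplace M t < \<infinity>"
  shows "laplace M t = ennreal (\<integral>x. exp (t * x) \<partial>M)"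
  unfolding laplace_def
  by (rule nn_integral_eq_integral[OF laplace_integrable[OF assms]]) auto

lemma cmgf_real: "cmgf M (complex_of_real t) = complex_of_real (\<integral>x. exp (t * x) \<partial>M)"
proof -
  have "cmgf M (complex_of_real t) = (CLINT x|M. complex_of_real (exp (t * x)))"
    unfolding cmgf_def by (simp add: exp_of_real[symmetric])
  also have "\<dots> = complex_of_real (\<integral>x. exp (t * x) \<partial>M)"
    by (rule integral_complex_of_real)
  finally show ?thesis .
qed

lemma mgf_unique:
  fixes M1 M2 :: "real measure"
  assumes p1: "prob_space M1" and p2: "prob_space M2"
    and s1[measurable_cong]: "sets M1 = sets borel" and s2[measurable_cong]: "sets M2 = sets borel"
    and ab: "a < b"
    and fin: "\<And>t. a < t \<Longrightarrow> t < b \<Longrightarrow> laplace M1 t < \<infinity>"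
    and eq: "\<And>t. a < t \<Longrightarrow> t < b \<Longrightarrow> laplace M1 t = laplace M2 t"
  shows "M1 = M2"
proof -
  have fin2: "\<And>t. a < t \<Longrightarrow> t < b \<Longrightarrow> laplace M2 t < \<infinity>" using fin eq by metis
  let ?S = "{z. a < Re z \<and> Re z < b}"
  have real_eq: "(\<integral>x. exp (t * x) \<partial>M1) = (\<integral>x. exp (t * x) \<partial>M2)" if "a < t" "t < b" for t
    using laplace_eq_integral[OF s1 fin[OF that]] laplace_eq_integral[OF s2 fin2[OF that]] eq[OF that]
    by (simp add: ennreal_inj integral_nonneg_AE)
  define c where "c = (a + b) / 2"
  have c: "a < c" "c < b" using ab by (auto simp: c_def)
  have eqS: "?S = {z. a < Re z} \<inter> {z. Re z < b}" by auto
  have zero: "cmgf M1 w - cmgf M2 w = 0" if w: "w \<in> ?S" for w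
  proof (rule analytic_continuation[where f="\<lambda>z. cmgf M1 z - cmgf M2 z" and S="?S"
          and U="complex_of_real ` {a<..<b}" and \<xi>="complex_of_real c"])
    show "(\<lambda>z. cmgf M1 z - cmgf M2 z) holomorphic_on ?S"
      by (intro holomorphic_on_diff cmgf_holomorphic s1 s2 fin fin2)
    show "open ?S" unfolding eqS by (intro open_Int open_halfspace_Re_gt open_halfspace_Re_lt)
    show "connected ?S" unfolding eqS
      by (intro convex_connected convex_Int convex_halfspace_Re_gt convex_halfspace_Re_lt)
    show "complex_of_real ` {a<..<b} \<subseteq> ?S" by auto
    show "complex_of_real c \<in> ?S" using c by auto
    show "w \<in> ?S" by (rule w)
    show "cmgf M1 z - cmgf M2 z = 0" if "z \<in> complex_of_real ` {a<..<b}" for z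
      using that real_eq by (auto simp: cmgf_real)
    show "complex_of_real c islimpt complex_of_real ` {a<..<b}"
      unfolding islimpt_approachable
    proof (intro allI impI)
      fix e :: real assume e: "0 < e"
      define m where "m = min (e / 2) ((b - a) / 4)"
      have m3: "m \<le> (b - a) / 4" unfolding m_def by (rule min.cobounded2)
      have m: "0 < m" "m < e" "m \<le> (b - a) / 4" using e ab m3 by (auto simp: m_def)
      show "\<exists>x'\<in>complex_of_real ` {a<..<b}. x' \<noteq> complex_of_real c \<and> dist x' (complex_of_real c) < e"
      proof (intro bexI conjI)
        show "complex_of_real (c + m) \<noteq> complex_of_real c" using m by simp
        show "dist (complex_of_real (c + m)) (complex_of_real c) < e"
          using m by (simp add: dist_norm flip: of_real_diff)
        have "a < c + m" using m c by linarith
        moreover have "c + m < b" using m3 ab unfolding c_def by (simp add: field_simps)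
        ultimately show "complex_of_real (c + m) \<in> complex_of_real ` {a<..<b}"
          by (intro imageI) auto
      qed
    qed
  qed
  define L where "L = (\<integral>x. exp (c * x) \<partial>M1)"
  have L2: "L = (\<integral>x. exp (c * x) \<partial>M2)" using real_eq[OF c] by (simp add: L_def)
  have Lpos: "0 < L"
  proof -
    have "0 \<le> L" unfolding L_def by (rule integral_nonneg_AE) auto
    moreover have "L \<noteq> 0"
    proof
      assume "L = 0"
      then have "AE x in M1. exp (c * x) = 0"
        unfolding L_def by (subst (asm) integral_nonneg_eq_0_iff_AE)
          (auto intro: laplace_integrable[OF s1 fin[OF c]])
      then have "AE x in M1. False" by simp
      then show False using prob_space.AE_False[OF p1] by simp
    qed
    ultimately show ?thesis by simp
  qed
  define T where "T M = density M (\<lambda>x. ennreal (exp (c * x) / L))" for M :: "real measure"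
  have Tdist: "real_distribution (T M)"
    if p: "prob_space M" and s[measurable_cong]: "sets M = sets borel"
      and LM: "L = (\<integral>x. exp (c * x) \<partial>M)" and fM: "laplace M c < \<infinity>" for M
  proof -
    have int: "integrable M (\<lambda>x. exp (c * x))" by (rule laplace_integrable[OF s fM])
    have "emeasure (T M) (space (T M)) = (\<integral>\<^sup>+ x. ennreal (exp (c * x) / L) * indicator (space M) x \<partial>M)"
      unfolding T_def by (simp add: emeasure_density)
    also have "\<dots> = (\<integral>\<^sup>+ x. ennreal (exp (c * x) / L) \<partial>M)"
      by (intro nn_integral_cong) (simp add: indicator_def)
    also have "\<dots> = ennreal (\<integral>x. exp (c * x) / L \<partial>M)"
      by (rule nn_integral_eq_integral) (use int Lpos in auto)
    also have "\<dots> = 1" using Lpos by (simp add: LM[symmetric])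
    finally have "emeasure (T M) (space (T M)) = 1" .
    then have "prob_space (T M)" by (rule prob_spaceI)
    moreover have "sets (T M) = sets borel" by (simp add: T_def s)
    ultimately show ?thesis by (simp add: real_distribution_def real_distribution_axioms_def)
  qed
  have charT: "char (T M) t = cmgf M (complex_of_real c + \<i> * complex_of_real t) / complex_of_real L"
    if s[measurable_cong]: "sets M = sets borel" for M t
  proof -
    have "char (T M) t = (CLINT x|M. (exp (c * x) / L) *\<^sub>R iexp (t * x))"
      unfolding char_def T_def
      by (rule integral_density) (use Lpos in auto)
    also have "\<dots> = (CLINT x|M. exp ((complex_of_real c + \<i> * complex_of_real t) * complex_of_real x) / complex_of_real L)"
    proof (rule Bochner_Integration.integral_cong[OF refl])
      fix x
      have "(exp (c * x) / L) *\<^sub>R iexp (t * x) = complex_of_real (exp (c * x)) * iexp (t * x) / complex_of_real L"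
        by (simp add: scaleR_conv_of_real)
      also have "\<dots> = exp ((complex_of_real c + \<i> * complex_of_real t) * complex_of_real x) / complex_of_real L"
        by (simp add: exp_of_real[symmetric] exp_add[symmetric] algebra_simps)
      finally show "(exp (c * x) / L) *\<^sub>R iexp (t * x) = exp ((complex_of_real c + \<i> * complex_of_real t) * complex_of_real x) / complex_of_real L" .
    qed
    also have "\<dots> = cmgf M (complex_of_real c + \<i> * complex_of_real t) / complex_of_real L"
      unfolding cmgf_def by (rule integral_divide_zero)
    finally show ?thesis .
  qed
  have "char (T M1) = char (T M2)"
  proof
    fix t
    have "complex_of_real c + \<i> * complex_of_real t \<in> ?S" using c by simp
    from zero[OF this] show "char (T M1) t = char (T M2) t"
      by (simp add: charT[OF s1] charT[OF s2])
  qed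
  then have TT: "T M1 = T M2"
    by (intro Levy_uniqueness Tdist p1 p2 s1 s2 fin fin2 c) (auto simp: L_def L2[unfolded L_def])
  have untilt: "density (T M) (\<lambda>x. ennreal (L / exp (c * x))) = M"
    if s[measurable_cong]: "sets M = sets borel" for M
  proof -
    have "density (T M) (\<lambda>x. ennreal (L / exp (c * x))) =
          density M (\<lambda>x. ennreal (exp (c * x) / L) * ennreal (L / exp (c * x)))"
      unfolding T_def by (rule density_density_eq) auto
    also have "\<dots> = density M (\<lambda>_. 1)"
    proof (rule density_cong)
      show "AE x in M. ennreal (exp (c * x) / L) * ennreal (L / exp (c * x)) = 1"
        using Lpos by (intro AE_I2) (simp add: ennreal_mult''[symmetric])
    qed auto
    also have "\<dots> = M" by (rule density_1)
    finally show ?thesis .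
  qed
  show ?thesis using untilt[OF s1] untilt[OF s2] TT by metis
qed



lemma conv_pow_props:
  assumes "prob_space M" and sM: "sets M = sets borel"
  shows "prob_space (conv_pow M n) \<and> sets (conv_pow M n) = sets borel"
proof (induction n)
  case 0
  then show ?case by (auto intro: prob_space_return)
next
  case (Suc n)
  then have p: "prob_space (conv_pow M n)" and s: "sets (conv_pow M n) = sets borel" by auto
  have "prob_space (distr (M \<Otimes>\<^sub>M conv_pow M n) borel (\<lambda>(x, y). x + y))"
  proof (rule prob_space.prob_space_distr)
    show "prob_space (M \<Otimes>\<^sub>M conv_pow M n)" by (intro prob_space_pair assms p)
    have "(\<lambda>(x, y). x + y) \<in> (borel \<Otimes>\<^sub>M borel) \<rightarrow>\<^sub>M (borel :: real measure)" by measurable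
    then show "(\<lambda>(x, y). x + y) \<in> (M \<Otimes>\<^sub>M conv_pow M n) \<rightarrow>\<^sub>M (borel :: real measure)"
      by (simp add: measurable_def sets_pair_measure_cong[OF sM s] space_pair_measure
          sets_eq_imp_space_eq[OF sM] sets_eq_imp_space_eq[OF s])
  qed
  then show ?case by (simp add: convolution_def)
qed

lemma conv_pow_prob: "prob_space M \<Longrightarrow> sets M = sets borel \<Longrightarrow> prob_space (conv_pow M n)"
  using conv_pow_props by blast

lemma conv_pow_sets: "prob_space M \<Longrightarrow> sets M = sets borel \<Longrightarrow> sets (conv_pow M n) = sets borel"
  using conv_pow_props by blast

lemma prob_fin: "prob_space M \<Longrightarrow> finite_measure M"
  by (simp add: prob_space_def)

lemma laplace_conv:
  assumes "finite_measure M" "finite_measure N" and [measurable_cong]: "sets M = sets borel" "sets N = sets borel"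
  shows "laplace (convolution M N) l = laplace M l * laplace N l"
proof -
  have "laplace (convolution M N) l = (\<integral>\<^sup>+x. \<integral>\<^sup>+y. ennreal (exp (l * (x + y))) \<partial>N \<partial>M)"
    unfolding laplace_def by (rule nn_integral_convolution) (use assms in auto)
  also have "\<dots> = (\<integral>\<^sup>+x. ennreal (exp (l * x)) * (\<integral>\<^sup>+y. ennreal (exp (l * y)) \<partial>N) \<partial>M)"
    by (intro nn_integral_cong) (simp add: distrib_left exp_add ennreal_mult nn_integral_cmult[symmetric])
  also have "\<dots> = laplace M l * laplace N l"
    unfolding laplace_def by (rule nn_integral_multc) measurable
  finally show ?thesis .
qed

lemma laplace_prob0: "prob_space M \<Longrightarrow> laplace M 0 = 1"
  unfolding laplace_def by (simp add: prob_space.emeasure_space_1)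

lemma laplace_conv_pow:
  assumes "prob_space M" and sM: "sets M = sets borel"
  shows "laplace (conv_pow M n) l = laplace M l ^ n"
proof (induction n)
  case 0
  then show ?case by (simp add: laplace_def nn_integral_return)
next
  case (Suc n)
  have "laplace (conv_pow M (Suc n)) l = laplace M l * laplace (conv_pow M n) l"
    by (simp, rule laplace_conv)
      (use assms conv_pow_sets in \<open>auto intro: prob_fin conv_pow_prob\<close>)
  then show ?case using Suc by simp
qed


definition Pp :: "real measure \<Rightarrow> real \<Rightarrow> ennreal" where
  "Pp K l = (\<integral>\<^sup>+x. indicator {0..} x * ennreal (exp (l * x)) \<partial>K)"

definition Qn :: "real measure \<Rightarrow> real \<Rightarrow> ennreal" where
  "Qn K l = (\<integral>\<^sup>+x. indicator {..<0} x * ennreal (exp (l * x)) \<partial>K)"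

lemma lap_split:
  assumes [measurable_cong]: "sets K = sets borel"
  shows "laplace K l = Pp K l + Qn K l"
proof -
  have "Pp K l + Qn K l = (\<integral>\<^sup>+x. indicator {0..} x * ennreal (exp (l * x)) +
           indicator {..<0} x * ennreal (exp (l * x)) \<partial>K)"
    unfolding Pp_def Qn_def by (rule nn_integral_add[symmetric]) auto
  also have "\<dots> = laplace K l"
    unfolding laplace_def by (intro nn_integral_cong) (auto simp: indicator_def)
  finally show ?thesis by simp
qed

lemma Qn_le:
  assumes [measurable_cong]: "sets K = sets borel" and "l' \<le> l"
  shows "Qn K l \<le> laplace K l'"
  unfolding Qn_def laplace_def
proof (intro nn_integral_mono)
  fix x :: real
  show "indicator {..<0} x * ennreal (exp (l * x)) \<le> ennreal (exp (l' * x))"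
  proof (cases "x < 0")
    case True
    then have "l * x \<le> l' * x" using assms(2) by (simp add: mult_right_mono_neg)
    then show ?thesis using True by (simp add: indicator_def)
  qed (simp add: indicator_def)
qed

lemma Pp_le: "Pp K l \<le> laplace K l"
  unfolding Pp_def laplace_def
  by (intro nn_integral_mono) (simp add: indicator_def)

lemma same_Pp:
  assumes sp: "same_pos_powers M N" and n: "n \<ge> 1"
    and pM: "prob_space M" and sM: "sets M = sets borel"
    and pN: "prob_space N" and sN: "sets N = sets borel"
  shows "Pp (conv_pow M n) l = Pp (conv_pow N n) l"
proof -
  let ?A = "conv_pow M n" and ?B = "conv_pow N n"
  have sA[measurable_cong]: "sets ?A = sets borel" by (rule conv_pow_sets[OF pM sM])
  have sB[measurable_cong]: "sets ?B = sets borel" by (rule conv_pow_sets[OF pN sN])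
  have dens: "density ?A (indicator {0..}) = density ?B (indicator {0..})"
  proof (rule measure_eqI)
    show "sets (density ?A (indicator {0..})) = sets (density ?B (indicator {0..}))"
      by (simp add: sA sB)
    fix X assume "X \<in> sets (density ?A (indicator {0..}))"
    then have X: "X \<in> sets borel" by (simp add: sA)
    have "emeasure (density ?A (indicator {0..})) X = emeasure ?A ({0..} \<inter> X)"
      by (rule emeasure_restricted) (use X sA in auto)
    also have "\<dots> = emeasure ?B ({0..} \<inter> X)"
      using sp n X unfolding same_pos_powers_def by auto
    also have "\<dots> = emeasure (density ?B (indicator {0..})) X"
      by (rule emeasure_restricted[symmetric]) (use X sB in auto)
    finally show "emeasure (density ?A (indicator {0..})) X = emeasure (density ?B (indicator {0..})) X" .
  qed
  have "Pp ?A l = (\<integral>\<^sup>+x. ennreal (exp (l * x)) \<partial>density ?A (indicator {0..}))"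
    unfolding Pp_def by (rule nn_integral_density[symmetric]) auto
  also have "\<dots> = (\<integral>\<^sup>+x. ennreal (exp (l * x)) \<partial>density ?B (indicator {0..}))"
    by (simp only: dens)
  also have "\<dots> = Pp ?B l"
    unfolding Pp_def by (rule nn_integral_density) auto
  finally show ?thesis .
qed

lemma same_sym: "same_pos_powers M N \<Longrightarrow> same_pos_powers N M"
  unfolding same_pos_powers_def by metis

lemma pow_limit_contra:
  fixes A B C :: real
  assumes "0 \<le> A" "A < B" "0 \<le> C" "C < B"
    and le: "\<And>n. n \<ge> 1 \<Longrightarrow> B ^ n \<le> A ^ n + C ^ n"
  shows False
proof -
  have B0: "0 < B" using assms by linarith
  have lim: "(\<lambda>n. (A / B) ^ n + (C / B) ^ n) \<longlonglongrightarrow> 0 + 0"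
    by (intro tendsto_add LIMSEQ_power_zero) (use assms B0 in auto)
  have "\<forall>n\<ge>1. 1 \<le> (A / B) ^ n + (C / B) ^ n"
  proof (intro allI impI)
    fix n :: nat assume "n \<ge> 1"
    from le[OF this] have "B ^ n / B ^ n \<le> (A ^ n + C ^ n) / B ^ n"
      using B0 by (intro divide_right_mono) auto
    then show "1 \<le> (A / B) ^ n + (C / B) ^ n"
      using B0 by (simp add: power_divide add_divide_distrib)
  qed
  then have "1 \<le> (0::real) + 0" by (intro LIMSEQ_le_const[OF lim]) blast
  then show False by simp
qed

lemma KL:
  assumes sp: "same_pos_powers M N"
    and pM: "prob_space M" and sM: "sets M = sets borel"
    and pN: "prob_space N" and sN: "sets N = sets borel"
    and ll: "l' \<le> l" and lt: "laplace N l' < laplace N l" and fin: "laplace N l < \<infinity>"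
  shows "laplace N l \<le> laplace M l"
proof (rule ccontr)
  assume "\<not> laplace N l \<le> laplace M l"
  then have lt2: "laplace M l < laplace N l" by simp
  define A where "A = enn2real (laplace M l)"
  define B where "B = enn2real (laplace N l)"
  define C where "C = enn2real (laplace N l')"
  have eA: "laplace M l = ennreal A" using lt2 fin unfolding A_def
    by (simp add: ennreal_enn2real_if)
  have eB: "laplace N l = ennreal B" using fin unfolding B_def by (simp add: ennreal_enn2real_if)
  have eC: "laplace N l' = ennreal C" using lt fin unfolding C_def
    by (simp add: ennreal_enn2real_if)
  have A0: "0 \<le> A" "0 \<le> C" by (simp_all add: A_def C_def)
  have B0: "0 \<le> B" by (simp add: B_def)
  have AB: "A < B" using lt2 eA eB A0 by (simp add: ennreal_less_iff)
  have CB: "C < B" using lt eC eB A0 by (simp add: ennreal_less_iff)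
  show False
  proof (rule pow_limit_contra[OF A0(1) AB A0(2) CB])
    fix n :: nat assume n: "n \<ge> 1"
    have sMn: "sets (conv_pow M n) = sets borel" by (rule conv_pow_sets[OF pM sM])
    have sNn: "sets (conv_pow N n) = sets borel" by (rule conv_pow_sets[OF pN sN])
    have "ennreal (B ^ n) = laplace (conv_pow N n) l"
      using eB B0 by (simp add: laplace_conv_pow[OF pN sN] ennreal_power)
    also have "\<dots> = Pp (conv_pow N n) l + Qn (conv_pow N n) l" by (rule lap_split[OF sNn])
    also have "\<dots> = Pp (conv_pow M n) l + Qn (conv_pow N n) l"
      using same_Pp[OF sp n pM sM pN sN] by simp
    also have "\<dots> \<le> laplace (conv_pow M n) l + laplace (conv_pow N n) l'"
      by (intro add_mono Pp_le Qn_le[OF sNn ll])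
    also have "\<dots> = ennreal (A ^ n + C ^ n)"
      using eA eC A0 by (simp add: laplace_conv_pow[OF pN sN] laplace_conv_pow[OF pM sM] ennreal_power ennreal_plus)
    finally show "B ^ n \<le> A ^ n + C ^ n"
      using A0 by (subst (asm) ennreal_le_iff) auto
  qed
qed


lemma lap_left:
  assumes [measurable_cong]: "sets K = sets borel" and v: "v < laplace K u"
  shows "\<exists>\<delta>>0. \<forall>t. u - \<delta> \<le> t \<and> t \<le> u \<longrightarrow> v < laplace K t"
proof -
  define f where "f k x = indicator {0..} x * ennreal (exp ((u - inverse (real (Suc k))) * x)) +
      indicator {..<0} x * ennreal (exp (u * x))" for k and x :: real
  have inc: "incseq f"
  proof (rule incseq_SucI, rule le_funI)
    fix k and x :: real
    show "f k x \<le> f (Suc k) x"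
    proof (cases "x \<ge> 0")
      case True
      have "inverse (real (Suc (Suc k))) \<le> inverse (real (Suc k))"
        by (rule le_imp_inverse_le) auto
      then have "(u - inverse (real (Suc k))) * x \<le> (u - inverse (real (Suc (Suc k)))) * x"
        using True by (intro mult_right_mono) auto
      then show ?thesis using True by (simp add: f_def indicator_def)
    qed (simp add: f_def indicator_def)
  qed
  have sup: "(SUP k. f k x) = ennreal (exp (u * x))" for x
  proof (cases "x \<ge> 0")
    case True
    have fx: "f k x = ennreal (exp ((u - inverse (real (Suc k))) * x))" for k
      using True by (simp add: f_def indicator_def)
    have "(\<lambda>k. f k x) \<longlonglongrightarrow> (SUP k. f k x)"
      by (rule LIMSEQ_SUP) (use inc in \<open>auto simp: incseq_def le_fun_def\<close>)
    moreover have "(\<lambda>k. f k x) \<longlonglongrightarrow> ennreal (exp ((u - 0) * x))"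
      unfolding fx by (intro tendsto_ennrealI tendsto_intros LIMSEQ_inverse_real_of_nat)
    ultimately show ?thesis using LIMSEQ_unique by fastforce
  next
    case False
    then show ?thesis by (simp add: f_def indicator_def)
  qed
  have "(\<integral>\<^sup>+x. (SUP k. f k x) \<partial>K) = (SUP k. \<integral>\<^sup>+x. f k x \<partial>K)"
    by (rule nn_integral_monotone_convergence_SUP[OF inc]) (unfold f_def, measurable)
  then have "(SUP k. \<integral>\<^sup>+x. f k x \<partial>K) = laplace K u"
    by (simp add: sup laplace_def)
  with v obtain k where k: "v < (\<integral>\<^sup>+x. f k x \<partial>K)"
    by (metis less_SUP_iff UNIV_I)
  show ?thesis
  proof (intro exI conjI allI impI)
    show "0 < inverse (real (Suc k))" by simp
    fix t assume t: "u - inverse (real (Suc k)) \<le> t \<and> t \<le> u"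
    have "(\<integral>\<^sup>+x. f k x \<partial>K) \<le> laplace K t"
      unfolding laplace_def
    proof (rule nn_integral_mono)
      fix x :: real
      show "f k x \<le> ennreal (exp (t * x))"
      proof (cases "x \<ge> 0")
        case True
        then have "(u - inverse (real (Suc k))) * x \<le> t * x" using t by (intro mult_right_mono) auto
        then show ?thesis using True by (simp add: f_def indicator_def)
      next
        case False
        then have "u * x \<le> t * x" using t by (intro mult_right_mono_neg) auto
        then show ?thesis using False by (simp add: f_def indicator_def)
      qed
    qed
    then show "v < laplace K t" using k by simp
  qed
qed

lemma lap_between_fin:
  assumes [measurable_cong]: "sets K = sets borel" and "a \<le> t" "t \<le> b" "laplace K a < \<infinity>" "laplace K b < \<infinity>"
  shows "laplace K t < \<infinity>"
proof -
  have "laplace K t \<le> (\<integral>\<^sup>+x. ennreal (exp (a * x)) + ennreal (exp (b * x)) \<partial>K)"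
    unfolding laplace_def
  proof (rule nn_integral_mono)
    fix x :: real
    have "exp (t * x) \<le> exp (a * x) + exp (b * x)"
    proof (cases "x \<ge> 0")
      case True
      then have "exp (t * x) \<le> exp (b * x)" using assms by (simp add: mult_right_mono)
      then show ?thesis by (smt (verit) exp_gt_zero)
    next
      case False
      then have "exp (t * x) \<le> exp (a * x)" using assms by (simp add: mult_right_mono_neg)
      then show ?thesis by (smt (verit) exp_gt_zero)
    qed
    then show "ennreal (exp (t * x)) \<le> ennreal (exp (a * x)) + ennreal (exp (b * x))"
      by (simp add: ennreal_plus[symmetric] del: ennreal_plus)
  qed
  also have "\<dots> = laplace K a + laplace K b"
    unfolding laplace_def by (rule nn_integral_add) auto
  also have "\<dots> < \<infinity>" using assms by simp
  finally show ?thesis .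
qed


lemma lapM_fin:
  assumes sp: "same_pos_powers M N"
    and pM: "prob_space M" and sM: "sets M = sets borel"
    and pN: "prob_space N" and sN: "sets N = sets borel"
    and l: "0 \<le> l" and fin: "laplace N l < \<infinity>"
  shows "laplace M l < \<infinity>"
proof -
  have s1: "sets (conv_pow M 1) = sets borel" by (rule conv_pow_sets[OF pM sM])
  have "laplace M l = laplace (conv_pow M 1) l" by (metis laplace_conv_pow[OF pM sM] power_one_right)
  also have "\<dots> = Pp (conv_pow M 1) l + Qn (conv_pow M 1) l" by (rule lap_split[OF s1])
  also have "\<dots> = Pp (conv_pow N 1) l + Qn (conv_pow M 1) l"
    using same_Pp[OF sp _ pM sM pN sN, of 1] by simp
  also have "\<dots> \<le> laplace (conv_pow N 1) l + laplace (conv_pow M 1) 0"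
    by (intro add_mono Pp_le Qn_le[OF s1 l])
  also have "\<dots> = laplace N l + 1"
    using laplace_conv_pow[OF pM sM, of 1 0] laplace_conv_pow[OF pN sN, of 1 l] laplace_prob0[OF pM]
    by (simp del: conv_pow.simps)
  also have "\<dots> < \<infinity>" using fin by simp
  finally show ?thesis .
qed

lemma b_transfer:
  assumes sp: "same_pos_powers M N"
    and pM: "prob_space M" and sM: "sets M = sets borel"
    and pN: "prob_space N" and sN: "sets N = sets borel"
    and b: "cond_b N"
  shows "cond_b M"
proof -
  obtain l where l: "l > 0" "1 < laplace N l" "laplace N l < \<infinity>" using b unfolding cond_b_def by blast
  have ge: "laplace N l \<le> laplace M l"
    by (rule KL[OF sp pM sM pN sN, of 0]) (use l laplace_prob0[OF pN] in auto)
  have fin: "laplace M l < \<infinity>" by (rule lapM_fin[OF sp pM sM pN sN]) (use l in auto)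
  show ?thesis unfolding cond_b_def using l ge fin by (intro exI[of _ l]) auto
qed



lemma ennreal_term_le_suminf: "(f::nat\<Rightarrow>ennreal) n \<le> suminf f"
proof -
  have "f n \<le> sum f {..<Suc n}" by (intro member_le_sum) auto
  also have "\<dots> \<le> suminf f" by (rule sum_le_suminf[OF summableI]) auto
  finally show ?thesis .
qed

lemma neg_mass_eq:
  assumes sp: "same_pos_powers M N"
    and pM: "prob_space M" and sM: "sets M = sets borel"
    and pN: "prob_space N" and sN: "sets N = sets borel" and n: "n \<ge> 1"
  shows "emeasure (conv_pow M n) {..<0} = emeasure (conv_pow N n) {..<0}"
proof -
  let ?A = "conv_pow M n" and ?B = "conv_pow N n"
  have pA: "prob_space ?A" and sA: "sets ?A = sets borel" using conv_pow_props[OF pM sM] by auto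
  have pB: "prob_space ?B" and sB: "sets ?B = sets borel" using conv_pow_props[OF pN sN] by auto
  have spA: "space ?A = UNIV" using sets_eq_imp_space_eq[OF sA] by simp
  have spB: "space ?B = UNIV" using sets_eq_imp_space_eq[OF sB] by simp
  have c: "{..<0::real} = UNIV - {0..}" by auto
  have e0: "emeasure ?A {0..} = emeasure ?B {0..}" using sp n unfolding same_pos_powers_def by auto
  have m0: "measure ?A {0..} = measure ?B {0..}" using e0 by (simp add: measure_def)
  have "measure ?A {..<0} = 1 - measure ?A {0..}"
    using prob_space.prob_compl[OF pA, of "{0..}"] sA spA c by simp
  also have "\<dots> = 1 - measure ?B {0..}" using m0 by simp
  also have "\<dots> = measure ?B {..<0}"
    using prob_space.prob_compl[OF pB, of "{0..}"] sB spB c by simp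
  finally have "measure ?A {..<0} = measure ?B {..<0}" .
  then show ?thesis
    using finite_measure.emeasure_eq_measure[OF prob_fin[OF pA]]
      finite_measure.emeasure_eq_measure[OF prob_fin[OF pB]] by metis
qed

lemma neg_mass_lap:
  assumes pN: "prob_space N" and sN: "sets N = sets borel" and l0: "l0 \<le> 0"
  shows "emeasure (conv_pow N n) {..<0} \<le> laplace N l0 ^ n"
proof -
  let ?B = "conv_pow N n"
  have sB[measurable_cong]: "sets ?B = sets borel" using conv_pow_props[OF pN sN] by auto
  have "emeasure ?B {..<0} = (\<integral>\<^sup>+x. indicator {..<0} x \<partial>?B)"
    by (rule nn_integral_indicator[symmetric]) (simp add: sB)
  also have "\<dots> \<le> laplace ?B l0"
    unfolding laplace_def
  proof (rule nn_integral_mono)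
    fix x :: real
    show "indicator {..<0} x \<le> ennreal (exp (l0 * x))"
    proof (cases "x < 0")
      case True
      then have "0 \<le> l0 * x" using l0 by (simp add: mult_nonpos_nonpos)
      then show ?thesis using True by (simp add: indicator_def)
    qed (simp add: indicator_def)
  qed
  also have "\<dots> = laplace N l0 ^ n" by (rule laplace_conv_pow[OF pN sN])
  finally show ?thesis .
qed

lemma conv_lower:
  assumes "finite_measure A" "finite_measure B"
    and sA[measurable_cong]: "sets A = sets borel" and sB[measurable_cong]: "sets B = sets borel"
    and S: "S \<in> sets borel" "T \<in> sets borel" "U \<in> sets borel"
    and sub: "\<And>x y. x \<in> S \<Longrightarrow> y \<in> T \<Longrightarrow> x + y \<in> U"
  shows "emeasure A S * emeasure B T \<le> emeasure (convolution A B) U"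
proof -
  have "emeasure A S * emeasure B T = (\<integral>\<^sup>+x. indicator S x * emeasure B T \<partial>A)"
    using S by (simp add: nn_integral_multc sA)
  also have "\<dots> = (\<integral>\<^sup>+x. \<integral>\<^sup>+y. indicator S x * indicator T y \<partial>B \<partial>A)"
    using S by (intro nn_integral_cong) (simp add: nn_integral_cmult sB)
  also have "\<dots> \<le> (\<integral>\<^sup>+x. \<integral>\<^sup>+y. indicator U (x + y) \<partial>B \<partial>A)"
    by (intro nn_integral_mono) (auto simp: indicator_def sub)
  also have "\<dots> = emeasure (convolution A B) U"
    by (rule convolution_emeasure'[symmetric]) (use assms in auto)
  finally show ?thesis .
qed

lemma pow_bound:
  assumes pM: "prob_space M" and sM: "sets M = sets borel"
  shows "emeasure M {..K} ^ n \<le> emeasure (conv_pow M n) {..real n * K}"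
proof (induction n)
  case 0
  then show ?case by (simp add: emeasure_return)
next
  case (Suc n)
  have "emeasure M {..K} ^ Suc n = emeasure M {..K} * emeasure M {..K} ^ n" by simp
  also have "\<dots> \<le> emeasure M {..K} * emeasure (conv_pow M n) {..real n * K}"
    by (intro mult_left_mono Suc) auto
  also have "\<dots> \<le> emeasure (convolution M (conv_pow M n)) {..real (Suc n) * K}"
    by (rule conv_lower) (use pM sM conv_pow_props[OF pM sM] prob_fin in \<open>auto simp: algebra_simps\<close>)
  finally show ?case by simp
qed

lemma tail_bound:
  assumes pM: "prob_space M" and sM: "sets M = sets borel"
  shows "emeasure M {..< - (real (Suc n) * K)} * emeasure M {..K} ^ n \<le> emeasure (conv_pow M (Suc n)) {..< - K}"
proof -
  have "emeasure M {..< - (real (Suc n) * K)} * emeasure M {..K} ^ n \<le>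
        emeasure M {..< - (real (Suc n) * K)} * emeasure (conv_pow M n) {..real n * K}"
    by (intro mult_left_mono pow_bound pM sM) auto
  also have "\<dots> \<le> emeasure (convolution M (conv_pow M n)) {..< - K}"
    by (rule conv_lower) (use pM sM conv_pow_props[OF pM sM] prob_fin in \<open>auto simp: algebra_simps\<close>)
  finally show ?thesis by simp
qed


lemma exists_K:
  fixes M :: "real measure"
  assumes pM: "prob_space M" and sM: "sets M = sets borel" and q: "q < 1"
  shows "\<exists>K\<ge>1. q < measure M {..K}"
proof -
  have spM: "space M = UNIV" using sets_eq_imp_space_eq[OF sM] by simp
  have un: "(\<Union>k. {..real k}) = UNIV"
  proof (rule set_eqI, rule iffI)
    fix x :: real
    have "x \<le> real (nat \<lceil>x\<rceil>)" by linarith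
    then show "x \<in> (\<Union>k. {..real k})" by auto
  qed auto
  have "(\<lambda>k. measure M {..real k}) \<longlonglongrightarrow> measure M (\<Union>k. {..real k})"
    by (rule finite_measure.finite_Lim_measure_incseq[OF prob_fin[OF pM]])
      (auto simp: sM incseq_def)
  also have "measure M (\<Union>k. {..real k}) = 1"
    using prob_space.prob_space[OF pM] spM un by simp
  finally have lim: "(\<lambda>k. measure M {..real k}) \<longlonglongrightarrow> 1" .
  then have "eventually (\<lambda>k. q < measure M {..real k}) sequentially"
    using q by (rule order_tendstoD(1))
  then obtain N where N: "\<And>k. k \<ge> N \<Longrightarrow> q < measure M {..real k}"
    by (auto simp: eventually_sequentially)
  show ?thesis
    by (rule exI[of _ "real (Suc N)"]) (use N[of "Suc N"] in auto)
qed

lemma tail_real: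
  assumes pM: "prob_space M" and sM: "sets M = sets borel"
    and K: "0 \<le> K" and q: "0 < q" "q \<le> measure M {..K}" and r: "0 \<le> r"
    and neg: "\<And>n. n \<ge> 1 \<Longrightarrow> emeasure (conv_pow M n) {..<0} \<le> ennreal (r ^ n)"
  shows "measure M {..< - (real (Suc n) * K)} \<le> (r / q) ^ (Suc n)"
proof -
  define m where "m = measure M {..< - (real (Suc n) * K)}"
  define Q where "Q = measure M {..K}"
  have fin: "finite_measure M" by (rule prob_fin[OF pM])
  have sS: "sets (conv_pow M (Suc n)) = sets borel" by (rule conv_pow_sets[OF pM sM])
  have m0: "0 \<le> m" "0 \<le> Q" by (simp_all add: m_def Q_def)
  have "ennreal (m * Q ^ n) = emeasure M {..< - (real (Suc n) * K)} * emeasure M {..K} ^ n"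
    using m0 by (simp add: finite_measure.emeasure_eq_measure[OF fin] m_def Q_def ennreal_mult ennreal_power)
  also have "\<dots> \<le> emeasure (conv_pow M (Suc n)) {..< - K}" by (rule tail_bound[OF pM sM])
  also have "\<dots> \<le> emeasure (conv_pow M (Suc n)) {..<0}"
    by (rule emeasure_mono) (use K sS in auto)
  also have "\<dots> \<le> ennreal (r ^ Suc n)" by (rule neg) simp
  finally have mQ: "m * Q ^ n \<le> r ^ Suc n" using r by (simp add: ennreal_le_iff)
  have Q1: "Q \<le> 1" unfolding Q_def by (rule prob_space.prob_le_1[OF pM])
  have "m * q ^ n \<le> m * Q ^ n" using q m0 by (intro mult_left_mono power_mono) (auto simp: Q_def)
  with mQ have "m * q ^ n \<le> r ^ Suc n" by linarith
  then have "m \<le> r ^ Suc n / q ^ n" using q by (simp add: field_simps)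
  also have "\<dots> = q * (r / q) ^ Suc n" using q by (simp add: power_divide field_simps)
  also have "\<dots> \<le> 1 * (r / q) ^ Suc n"
    using q Q1 r by (intro mult_right_mono) (auto simp: Q_def)
  finally show ?thesis by (simp add: m_def)
qed

lemma exp_moment:
  assumes pM: "prob_space M" and sM[measurable_cong]: "sets M = sets borel"
    and K: "0 < K" and \<rho>: "0 \<le> \<rho>" "\<rho> < 1"
    and tail: "\<And>n. measure M {..< - (real (Suc n) * K)} \<le> \<rho> ^ (Suc n)"
  shows "\<exists>\<eta>>0. laplace M (- \<eta>) < \<infinity>"
proof -
  define E where "E = 2 / (1 + \<rho>)"
  have E1: "1 < E" using \<rho> by (simp add: E_def field_simps)
  have E\<rho>: "E * \<rho> < 1" "0 \<le> E * \<rho>" using \<rho> by (auto simp: E_def field_simps)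
  define \<eta> where "\<eta> = ln E / K"
  have \<eta>0: "0 < \<eta>" using E1 K by (simp add: \<eta>_def)
  have eK: "exp (\<eta> * K) = E" using E1 K by (simp add: \<eta>_def)
  define g where "g m x = ennreal (E ^ Suc m) * indicator {..< - (real m * K)} x" for m :: nat and x :: real
  have pw: "ennreal (exp (- \<eta> * x)) \<le> 1 + (\<Sum>m. g m x)" for x
  proof (cases "x \<ge> 0")
    case True
    then have "exp (- \<eta> * x) \<le> 1" using \<eta>0 by (simp add: mult_nonneg_nonneg)
    then have "ennreal (exp (- \<eta> * x)) \<le> 1" by (simp add: ennreal_le_1)
    then show ?thesis by (rule order_trans) (simp add: add_increasing2)
  next
    case False
    define y where "y = - x / K"
    have y0: "0 < y" unfolding y_def by (rule divide_pos_pos) (use False K in auto)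
    define m0 where "m0 = nat (\<lceil>y\<rceil> - 1)"
    have c1: "1 \<le> \<lceil>y\<rceil>" using y0 by linarith
    have rm: "real m0 = real_of_int \<lceil>y\<rceil> - 1" using c1 by (simp add: m0_def)
    have "real m0 < y" using rm by linarith
    then have xlt: "x < - (real m0 * K)" using K by (simp add: y_def field_simps)
    have "y \<le> real (Suc m0)" using rm by linarith
    then have "- x \<le> real (Suc m0) * K" using K by (simp add: y_def field_simps)
    then have "\<eta> * (- x) \<le> \<eta> * (real (Suc m0) * K)" by (rule mult_left_mono) (use \<eta>0 in auto)
    then have "- \<eta> * x \<le> real (Suc m0) * (\<eta> * K)" by (simp add: algebra_simps)
    then have "exp (- \<eta> * x) \<le> exp (real (Suc m0) * (\<eta> * K))" by simp
    also have "\<dots> = E ^ Suc m0" by (simp only: exp_of_nat_mult eK)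
    finally have "ennreal (exp (- \<eta> * x)) \<le> g m0 x" using xlt by (simp add: g_def ennreal_leI)
    also have "\<dots> \<le> (\<Sum>m. g m x)" by (rule ennreal_term_le_suminf)
    finally show ?thesis by (simp add: add_increasing)
  qed
  have gm[measurable]: "g m \<in> borel_measurable borel" for m unfolding g_def by measurable
  have emb: "emeasure M {..< - (real m * K)} \<le> ennreal (\<rho> ^ m)" for m
  proof (cases m)
    case 0
    then show ?thesis using prob_space.emeasure_le_1[OF pM] by simp
  next
    case (Suc n)
    then show ?thesis
      using tail[of n] by (simp add: finite_measure.emeasure_eq_measure[OF prob_fin[OF pM]] ennreal_leI)
  qed
  have sumr: "summable (\<lambda>m. E ^ Suc m * \<rho> ^ m)"
  proof -
    have "summable (\<lambda>m. E * (E * \<rho>) ^ m)" using E\<rho> by (intro summable_mult summable_geometric) auto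
    then show ?thesis by (simp add: power_mult_distrib mult_ac)
  qed
  have "laplace M (- \<eta>) \<le> (\<integral>\<^sup>+x. 1 + (\<Sum>m. g m x) \<partial>M)"
    unfolding laplace_def by (intro nn_integral_mono pw)
  also have "\<dots> = (\<integral>\<^sup>+x. 1 \<partial>M) + (\<integral>\<^sup>+x. (\<Sum>m. g m x) \<partial>M)"
    by (rule nn_integral_add) auto
  also have "(\<integral>\<^sup>+x. (\<Sum>m. g m x) \<partial>M) = (\<Sum>m. \<integral>\<^sup>+x. g m x \<partial>M)"
    by (rule nn_integral_suminf) auto
  also have "\<dots> = (\<Sum>m. ennreal (E ^ Suc m) * emeasure M {..< - (real m * K)})"
    unfolding g_def by (intro suminf_cong nn_integral_cmult_indicator) (simp add: sM)
  also have "\<dots> \<le> (\<Sum>m. ennreal (E ^ Suc m * \<rho> ^ m))"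
  proof (intro suminf_le summableI)
    fix m
    have "ennreal (E ^ Suc m) * emeasure M {..< - (real m * K)} \<le> ennreal (E ^ Suc m) * ennreal (\<rho> ^ m)"
      by (intro mult_left_mono emb) auto
    then show "ennreal (E ^ Suc m) * emeasure M {..< - (real m * K)} \<le> ennreal (E ^ Suc m * \<rho> ^ m)"
      using E1 \<rho> by (simp add: ennreal_mult)
  qed
  also have "\<dots> = ennreal (\<Sum>m. E ^ Suc m * \<rho> ^ m)"
    by (rule suminf_ennreal2) (use sumr E1 \<rho> in auto)
  finally have "laplace M (- \<eta>) \<le> (\<integral>\<^sup>+x. 1 \<partial>M) + ennreal (\<Sum>m. E ^ Suc m * \<rho> ^ m)"
    by (simp add: add_left_mono)
  also have "\<dots> < \<infinity>" using prob_space.emeasure_space_1[OF pM] by simp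
  finally show ?thesis using \<eta>0 by blast
qed


lemma lap_convex0:
  assumes pK: "prob_space K" and sK[measurable_cong]: "sets K = sets borel"
    and th: "0 \<le> \<theta>" "\<theta> \<le> 1"
  shows "laplace K (\<theta> * a) \<le> ennreal \<theta> * laplace K a + ennreal (1 - \<theta>)"
proof -
  have pw: "exp (\<theta> * a * x) \<le> \<theta> * exp (a * x) + (1 - \<theta>)" for x
    using convex_onD[OF exp_convex th, of 0 "a * x"] by (simp add: mult_ac)
  have "laplace K (\<theta> * a) \<le> (\<integral>\<^sup>+x. ennreal \<theta> * ennreal (exp (a * x)) + ennreal (1 - \<theta>) \<partial>K)"
    unfolding laplace_def
  proof (rule nn_integral_mono)
    fix x
    have "ennreal (exp (\<theta> * a * x)) \<le> ennreal (\<theta> * exp (a * x) + (1 - \<theta>))"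
      by (rule ennreal_leI[OF pw])
    then show "ennreal (exp (\<theta> * a * x)) \<le> ennreal \<theta> * ennreal (exp (a * x)) + ennreal (1 - \<theta>)"
      using th by (simp add: ennreal_plus ennreal_mult)
  qed
  also have "\<dots> = ennreal \<theta> * laplace K a + ennreal (1 - \<theta>) * emeasure K (space K)"
    unfolding laplace_def
    by (subst nn_integral_add) (auto simp: nn_integral_cmult)
  also have "\<dots> = ennreal \<theta> * laplace K a + ennreal (1 - \<theta>)"
    by (simp add: prob_space.emeasure_space_1[OF pK])
  finally show ?thesis .
qed

lemma Qn_young:
  assumes sK[measurable_cong]: "sets K = sets borel" and T: "0 < T"
  shows "Qn K l \<le> ennreal T * emeasure K {..<0} + ennreal (1 / T) * laplace K (2 * l)"
proof -
  have "Qn K l \<le> (\<integral>\<^sup>+x. ennreal T * indicator {..<0} x + ennreal (1 / T) * ennreal (exp ((2 * l) * x)) \<partial>K)"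
    unfolding Qn_def
  proof (rule nn_integral_mono)
    fix x :: real
    show "indicator {..<0} x * ennreal (exp (l * x)) \<le>
          ennreal T * indicator {..<0} x + ennreal (1 / T) * ennreal (exp ((2 * l) * x))"
    proof (cases "x < 0")
      case True
      have "exp (l * x) \<le> T + 1 / T * exp (2 * l * x)"
      proof (cases "exp (l * x) \<le> T")
        case True
        then show ?thesis using T by (smt (verit) divide_pos_pos exp_gt_zero mult_pos_pos)
      next
        case False
        have e2: "exp (2 * l * x) = exp (l * x) * exp (l * x)" by (simp add: exp_add[symmetric])
        have "T * exp (l * x) \<le> exp (l * x) * exp (l * x)"
          using False by (intro mult_right_mono) auto
        then have h: "T * exp (l * x) \<le> exp (2 * l * x)" by (simp only: e2)
        have "exp (l * x) = (T * exp (l * x)) / T" using T by simp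
        also have "\<dots> \<le> exp (2 * l * x) / T" by (rule divide_right_mono[OF h]) (use T in simp)
        finally have "exp (l * x) \<le> 1 / T * exp (2 * l * x)" by simp
        then show ?thesis using T by linarith
      qed
      then have "ennreal (exp (l * x)) \<le> ennreal (T + 1 / T * exp (2 * l * x))" by (rule ennreal_leI)
      moreover have "ennreal (1 / T) * ennreal (exp (2 * l * x)) = ennreal (exp (2 * l * x) / T)"
        using T by (simp add: ennreal_mult[symmetric])
      ultimately show ?thesis using True T by (simp add: indicator_def ennreal_plus)
    qed (simp add: indicator_def)
  qed
  also have "\<dots> = ennreal T * emeasure K {..<0} + ennreal (1 / T) * laplace K (2 * l)"
    unfolding laplace_def
    by (subst nn_integral_add) (auto simp: nn_integral_cmult sK)
  finally show ?thesis .
qed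

lemma pow3_contra:
  fixes a b c :: real
  assumes "0 \<le> a" "a < 1" "0 \<le> b" "b < 1" "0 \<le> c" "c < 1"
    and le: "\<And>n. n \<ge> 1 \<Longrightarrow> 1 \<le> a ^ n + b ^ n + c ^ n"
  shows False
proof -
  have lim: "(\<lambda>n. a ^ n + b ^ n + c ^ n) \<longlonglongrightarrow> 0 + 0 + 0"
    by (intro tendsto_add LIMSEQ_power_zero) (use assms in auto)
  have "1 \<le> (0::real) + 0 + 0" by (rule LIMSEQ_le_const[OF lim]) (use le in blast)
  then show False by simp
qed


lemma a_transfer:
  assumes sp: "same_pos_powers M N"
    and pM: "prob_space M" and sM: "sets M = sets borel"
    and pN: "prob_space N" and sN: "sets N = sets borel"
    and a: "cond_a N"
  shows "cond_a M"
proof -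
  obtain l0 where l0: "l0 < 0" "laplace N l0 < 1" using a unfolding cond_a_def by blast
  have l0f: "laplace N l0 < \<infinity>" by (rule order.strict_trans[OF l0(2)]) simp
  define r0 where "r0 = enn2real (laplace N l0)"
  have er0: "laplace N l0 = ennreal r0" using l0f by (simp add: r0_def ennreal_enn2real_if)
  have r00: "0 \<le> r0" by (simp add: r0_def)
  have r01: "r0 < 1" using l0(2) er0 r00 by (simp add: ennreal_less_one_iff)
  define r where "r = (1 + r0) / 2"
  have r: "0 < r" "r < 1" "r0 \<le> r" using r00 r01 by (auto simp: r_def)
  have neg: "emeasure (conv_pow M n) {..<0} \<le> ennreal (r ^ n)" if n: "n \<ge> 1" for n
  proof -
    have "emeasure (conv_pow M n) {..<0} = emeasure (conv_pow N n) {..<0}"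
      by (rule neg_mass_eq[OF sp pM sM pN sN n])
    also have "\<dots> \<le> laplace N l0 ^ n" by (rule neg_mass_lap[OF pN sN]) (use l0 in simp)
    also have "\<dots> = ennreal (r0 ^ n)" using er0 r00 by (simp add: ennreal_power)
    also have "\<dots> \<le> ennreal (r ^ n)" using r00 r by (intro ennreal_leI power_mono) auto
    finally show ?thesis .
  qed
  define q where "q = (1 + r) / 2"
  have q: "0 < q" "q < 1" "r < q" using r by (auto simp: q_def)
  obtain K where K: "K \<ge> 1" "q < measure M {..K}" using exists_K[OF pM sM q(2)] by blast
  have tail: "measure M {..< - (real (Suc n) * K)} \<le> (r / q) ^ Suc n" for n
    by (rule tail_real[OF pM sM _ _ _ _ neg]) (use K q r in auto)
  have rq: "0 \<le> r / q" "r / q < 1" using r q by (auto simp: field_simps)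
  obtain \<eta> where \<eta>: "\<eta> > 0" "laplace M (- \<eta>) < \<infinity>"
    using exp_moment[OF pM sM _ rq tail] K by auto
  define H where "H = enn2real (laplace M (- \<eta>))"
  have eH: "laplace M (- \<eta>) = ennreal H" using \<eta> by (simp add: H_def ennreal_enn2real_if)
  have H0: "0 \<le> H" by (simp add: H_def)
  define \<theta> where "\<theta> = min (min 1 ((1 - r) / (2 * (H + 1)))) (- l0 / \<eta>)"
  have th1: "\<theta> \<le> 1" "\<theta> \<le> (1 - r) / (2 * (H + 1))" "\<theta> \<le> - l0 / \<eta>"
    unfolding \<theta>_def by auto
  have "l0 / \<eta> < 0" using l0 \<eta> by (intro divide_neg_pos) auto
  then have th0: "0 < \<theta>" using r H0 by (auto simp: \<theta>_def)
  have th3: "\<theta> * \<eta> \<le> - l0"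
  proof -
    have "\<theta> * \<eta> \<le> (- l0 / \<eta>) * \<eta>" using th1(3) \<eta> by (intro mult_right_mono) auto
    also have "\<dots> = - l0" using \<eta> by simp
    finally show ?thesis .
  qed
  define lam where "lam = - (\<theta> * \<eta>) / 2"
  define h2 where "h2 = \<theta> * H + (1 - \<theta>)"
  have lam2: "laplace M (2 * lam) \<le> ennreal h2"
  proof -
    have "2 * lam = \<theta> * (- \<eta>)" by (simp add: lam_def)
    then have "laplace M (2 * lam) \<le> ennreal \<theta> * laplace M (- \<eta>) + ennreal (1 - \<theta>)"
      using lap_convex0[OF pM sM, of \<theta> "- \<eta>"] th0 th1 by simp
    also have "\<dots> = ennreal h2" using eH th0 th1 H0 by (simp add: h2_def ennreal_mult ennreal_plus)
    finally show ?thesis .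
  qed
  have h20: "0 \<le> h2" using th0 th1 H0 by (simp add: h2_def)
  have thH: "\<theta> * H \<le> (1 - r) / 2"
  proof -
    have "\<theta> * H \<le> \<theta> * (H + 1)" using th0 by simp
    also have "\<dots> \<le> (1 - r) / (2 * (H + 1)) * (H + 1)" using th1 H0 by (intro mult_right_mono) auto
    also have "\<dots> = (1 - r) / 2" using H0 by (simp add: field_simps)
    finally show ?thesis .
  qed
  have rh2: "r * h2 < 1"
  proof -
    have "r * h2 = r * (\<theta> * H) + r * (1 - \<theta>)" by (simp add: h2_def algebra_simps)
    also have "\<dots> \<le> 1 * (\<theta> * H) + r * 1"
      using r th0 th1 H0 by (intro add_mono mult_right_mono mult_left_mono) auto
    also have "\<dots> < 1" using thH r by simp
    finally show ?thesis .
  qed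
  define th' where "th' = lam / l0"
  have lam_neg: "lam < 0" using th0 \<eta> by (simp add: lam_def)
  have lam_ge: "l0 \<le> lam" using th3 l0 by (simp add: lam_def)
  have th'0: "0 < th'" using lam_neg l0 by (simp add: th'_def divide_neg_neg)
  have th'1: "th' \<le> 1" using lam_ge l0 by (simp add: th'_def divide_le_eq)
  have lam_eq: "lam = th' * l0" using l0 by (simp add: th'_def)
  define A where "A = th' * r0 + (1 - th')"
  have A: "0 \<le> A" "A < 1"
  proof -
    show "0 \<le> A" using th'0 th'1 r00 by (simp add: A_def)
    have "th' * r0 < th' * 1" using th'0 r01 by (intro mult_strict_left_mono) auto
    then show "A < 1" by (simp add: A_def)
  qed
  have lamN: "laplace N lam \<le> ennreal A"
  proof -
    have "laplace N lam \<le> ennreal th' * laplace N l0 + ennreal (1 - th')"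
      using lap_convex0[OF pN sN, of th' l0] th'0 th'1 lam_eq by simp
    also have "\<dots> = ennreal A" using er0 th'0 th'1 r00 by (simp add: A_def ennreal_mult ennreal_plus)
    finally show ?thesis .
  qed
  have lamMf: "laplace M lam < \<infinity>"
  proof (rule lap_between_fin[OF sM, of "- \<eta>" _ 0])
    have "\<theta> * \<eta> / 2 \<le> \<eta>" using th1 th0 \<eta> by (simp add: mult_left_le_one_le)
    then show "- \<eta> \<le> lam" by (simp add: lam_def)
  qed (use lam_neg \<eta> laplace_prob0[OF pM] in auto)
  define LM where "LM = enn2real (laplace M lam)"
  have eLM: "laplace M lam = ennreal LM" using lamMf by (simp add: LM_def ennreal_enn2real_if)
  have LM0: "0 \<le> LM" by (simp add: LM_def)
  define t where "t = (h2 + 1 / r) / 2"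
  have h2r: "h2 < 1 / r" using rh2 r by (simp add: field_simps)
  have t: "0 < t" "h2 < t" "t * r < 1"
  proof -
    have "0 < 1 / r" using r by simp
    then show "0 < t" using h20 unfolding t_def by (intro divide_pos_pos add_nonneg_pos) auto
    show "h2 < t" using h2r by (simp add: t_def)
    have "t < 1 / r" using h2r by (simp add: t_def)
    then show "t * r < 1" using r by (simp add: field_simps)
  qed
  have bound: "LM ^ n \<le> A ^ n + (t * r) ^ n + (h2 / t) ^ n" if n: "n \<ge> 1" for n
  proof -
    have sMn: "sets (conv_pow M n) = sets borel" by (rule conv_pow_sets[OF pM sM])
    have tn: "0 < t ^ n" using t by simp
    have "ennreal (LM ^ n) = laplace (conv_pow M n) lam"
      using eLM LM0 by (simp add: laplace_conv_pow[OF pM sM] ennreal_power)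
    also have "\<dots> = Pp (conv_pow M n) lam + Qn (conv_pow M n) lam" by (rule lap_split[OF sMn])
    also have "\<dots> = Pp (conv_pow N n) lam + Qn (conv_pow M n) lam"
      using same_Pp[OF sp n pM sM pN sN] by simp
    also have "\<dots> \<le> laplace (conv_pow N n) lam + (ennreal (t ^ n) * emeasure (conv_pow M n) {..<0} +
                     ennreal (1 / t ^ n) * laplace (conv_pow M n) (2 * lam))"
      by (intro add_mono Pp_le Qn_young[OF sMn tn])
    also have "\<dots> \<le> ennreal (A ^ n) + (ennreal (t ^ n) * ennreal (r ^ n) + ennreal (1 / t ^ n) * ennreal (h2 ^ n))"
    proof (intro add_mono mult_left_mono order.refl)
      have "laplace (conv_pow N n) lam = laplace N lam ^ n" by (rule laplace_conv_pow[OF pN sN])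
      also have "\<dots> \<le> ennreal A ^ n" by (intro power_mono lamN) simp
      also have "\<dots> = ennreal (A ^ n)" using A by (simp add: ennreal_power)
      finally show "laplace (conv_pow N n) lam \<le> ennreal (A ^ n)" .
      show "emeasure (conv_pow M n) {..<0} \<le> ennreal (r ^ n)" by (rule neg[OF n])
      have "laplace (conv_pow M n) (2 * lam) = laplace M (2 * lam) ^ n" by (rule laplace_conv_pow[OF pM sM])
      also have "\<dots> \<le> ennreal h2 ^ n" by (intro power_mono lam2) simp
      also have "\<dots> = ennreal (h2 ^ n)" using h20 by (simp add: ennreal_power)
      finally show "laplace (conv_pow M n) (2 * lam) \<le> ennreal (h2 ^ n)" .
    qed auto
    also have "\<dots> = ennreal (A ^ n + (t * r) ^ n + (h2 / t) ^ n)"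
      using A r t h20 by (simp add: ennreal_mult[symmetric] ennreal_plus[symmetric] power_mult_distrib
          power_divide add.assoc del: ennreal_plus)
    finally show ?thesis using LM0 A r t h20 by (subst (asm) ennreal_le_iff) auto
  qed
  have "LM < 1"
  proof (rule ccontr)
    assume "\<not> LM < 1"
    then have L1: "1 \<le> LM" by simp
    show False
    proof (rule pow3_contra[of A "t * r" "h2 / t"])
      show "0 \<le> A" "A < 1" by (rule A(1), rule A(2))
      show "0 \<le> t * r" "t * r < 1" using t r by auto
      show "0 \<le> h2 / t" "h2 / t < 1" using t h20 by (auto simp: field_simps)
      fix n :: nat assume n: "n \<ge> 1"
      have "1 \<le> LM ^ n" using L1 by (rule one_le_power)
      also have "\<dots> \<le> A ^ n + (t * r) ^ n + (h2 / t) ^ n" by (rule bound[OF n])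
      finally show "1 \<le> A ^ n + (t * r) ^ n + (h2 / t) ^ n" .
    qed
  qed
  then have "laplace M lam < 1" using eLM LM0 by (simp add: ennreal_less_one_iff)
  then show ?thesis unfolding cond_a_def using lam_neg by blast
qed


lemma interval_eq:
  assumes sp: "same_pos_powers M N"
    and pM: "prob_space M" and sM: "sets M = sets borel"
    and pN: "prob_space N" and sN: "sets N = sets borel"
    and ab: "cond_a N \<or> cond_b N"
  shows "\<exists>p q. p < q \<and> (\<forall>t. p < t \<and> t < q \<longrightarrow> laplace M t < \<infinity> \<and> laplace M t = laplace N t)"
  using ab
proof
  assume b: "cond_b N"
  obtain l where l: "l > 0" "1 < laplace N l" "laplace N l < \<infinity>" using b unfolding cond_b_def by blast
  obtain \<delta> where d: "\<delta> > 0" "\<And>t. l - \<delta> \<le> t \<and> t \<le> l \<Longrightarrow> 1 < laplace N t"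
    using lap_left[OF sN l(2)] by blast
  show ?thesis
  proof (intro exI conjI allI impI)
    show "max (l - \<delta>) 0 < l" using l d by auto
    fix t assume t: "max (l - \<delta>) 0 < t \<and> t < l"
    have N1: "1 < laplace N t" using d t by auto
    have Nfin: "laplace N t < \<infinity>"
      by (rule lap_between_fin[OF sN, of 0 _ l]) (use t l laplace_prob0[OF pN] in auto)
    have ge: "laplace N t \<le> laplace M t"
      by (rule KL[OF sp pM sM pN sN, of 0]) (use t N1 Nfin laplace_prob0[OF pN] in auto)
    have Mfin: "laplace M t < \<infinity>" by (rule lapM_fin[OF sp pM sM pN sN]) (use t Nfin in auto)
    have le: "laplace M t \<le> laplace N t"
      by (rule KL[OF same_sym[OF sp] pN sN pM sM, of 0]) (use t N1 ge Mfin laplace_prob0[OF pM] in auto)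
    show "laplace M t < \<infinity>" by (rule Mfin)
    show "laplace M t = laplace N t" using ge le by simp
  qed
next
  assume a: "cond_a N"
  have aM: "cond_a M" by (rule a_transfer[OF sp pM sM pN sN a])
  obtain l0 where l0: "l0 < 0" "laplace N l0 < 1" using a unfolding cond_a_def by blast
  obtain l1 where l1: "l1 < 0" "laplace M l1 < 1" using aM unfolding cond_a_def by blast
  obtain \<delta>1 where d1: "\<delta>1 > 0" "\<And>t. 0 - \<delta>1 \<le> t \<and> t \<le> 0 \<Longrightarrow> laplace N l0 < laplace N t"
    using lap_left[OF sN, of "laplace N l0" 0] l0 laplace_prob0[OF pN] by auto
  obtain \<delta>2 where d2: "\<delta>2 > 0" "\<And>t. 0 - \<delta>2 \<le> t \<and> t \<le> 0 \<Longrightarrow> laplace M l1 < laplace M t"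
    using lap_left[OF sM, of "laplace M l1" 0] l1 laplace_prob0[OF pM] by auto
  define p where "p = max (max l0 l1) (- min \<delta>1 \<delta>2)"
  have l0f: "laplace N l0 < \<infinity>" by (rule order.strict_trans[OF l0(2)]) simp
  have l1f: "laplace M l1 < \<infinity>" by (rule order.strict_trans[OF l1(2)]) simp
  show ?thesis
  proof (intro exI conjI allI impI)
    show "p < 0" using l0 l1 d1 d2 by (auto simp: p_def)
    fix t assume t: "p < t \<and> t < 0"
    have tt: "l0 < t" "l1 < t" "- \<delta>1 \<le> t" "- \<delta>2 \<le> t" using t by (auto simp: p_def)
    have Nfin: "laplace N t < \<infinity>"
      by (rule lap_between_fin[OF sN, of l0 _ 0]) (use t tt l0f laplace_prob0[OF pN] in auto)
    have Mfin: "laplace M t < \<infinity>"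
      by (rule lap_between_fin[OF sM, of l1 _ 0]) (use t tt l1f laplace_prob0[OF pM] in auto)
    have ge: "laplace N t \<le> laplace M t"
      by (rule KL[OF sp pM sM pN sN, of l0]) (use t tt d1 Nfin in auto)
    have le: "laplace M t \<le> laplace N t"
      by (rule KL[OF same_sym[OF sp] pN sN pM sM, of l1]) (use t tt d2 Mfin in auto)
    show "laplace M t < \<infinity>" by (rule Mfin)
    show "laplace M t = laplace N t" using ge le by simp
  qed
qed


theorem theorem2p7:
  fixes \<mu> :: "real measure"
  assumes "prob_space \<mu>" and "sets \<mu> = sets borel"
    and "\<not> measure_support \<mu> \<subseteq> {..<0}"
  shows "\<forall>\<mu>1. prob_space \<mu>1 \<and> sets \<mu>1 = sets borel \<and> same_pos_powers \<mu>1 \<mu> \<longrightarrow>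
           (cond_a \<mu>1 \<longleftrightarrow> cond_a \<mu>) \<and> (cond_b \<mu>1 \<longleftrightarrow> cond_b \<mu>)
           \<and> ((cond_a \<mu> \<or> cond_b \<mu>) \<longrightarrow> \<mu>1 = \<mu>)"
proof (intro allI impI)
  fix \<mu>1 assume h: "prob_space \<mu>1 \<and> sets \<mu>1 = sets borel \<and> same_pos_powers \<mu>1 \<mu>"
  then have p1: "prob_space \<mu>1" and s1: "sets \<mu>1 = sets borel" and sp: "same_pos_powers \<mu>1 \<mu>"
    by auto
  have sp': "same_pos_powers \<mu> \<mu>1" by (rule same_sym[OF sp])
  have A: "cond_a \<mu>1 \<longleftrightarrow> cond_a \<mu>"
    using a_transfer[OF sp p1 s1 assms(1,2)] a_transfer[OF sp' assms(1,2) p1 s1] by blast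
  have B: "cond_b \<mu>1 \<longleftrightarrow> cond_b \<mu>"
    using b_transfer[OF sp p1 s1 assms(1,2)] b_transfer[OF sp' assms(1,2) p1 s1] by blast
  have C: "\<mu>1 = \<mu>" if ab: "cond_a \<mu> \<or> cond_b \<mu>"
  proof -
    obtain p q where pq: "p < q"
      and eq: "\<And>t. p < t \<and> t < q \<Longrightarrow> laplace \<mu>1 t < \<infinity> \<and> laplace \<mu>1 t = laplace \<mu> t"
      using interval_eq[OF sp p1 s1 assms(1,2) ab] by blast
    show ?thesis
    proof (rule mgf_unique[OF p1 assms(1) s1 assms(2) pq])
      fix t assume "p < t" "t < q"
      then show "laplace \<mu>1 t < \<infinity>" "laplace \<mu>1 t = laplace \<mu> t" using eq by blast+
    qed
  qed
  show "(cond_a \<mu>1 \<longleftrightarrow> cond_a \<mu>) \<and> (cond_b \<mu>1 \<longleftrightarrow> cond_b \<mu>)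
           \<and> ((cond_a \<mu> \<or> cond_b \<mu>) \<longrightarrow> \<mu>1 = \<mu>)"
    using A B C by blast
qed

end
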